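(* Let $P,C$ be causal stable systems on $\mathcal{L}_{2e+}^n$ such that $P\#C$ is well-posed and the single-loop feedback system $P\#C|_{e_2=0}$ is stable, and assume $\theta(P)+\theta(C)\le\pi$. Let $G:e_1\mapsto y_1$ be the closed-loop map of $P\#C|_{e_2=0}$. Then $$\theta(G)\le\max\{\theta(P),\theta(C)\}.$$
   Context: For $n\ge1$, $\mathcal{L}_2^n$ is the set of measurable $u:\mathbb{R}\to\mathbb{R}^n$ with $\|u\|_2^2=\int|u(t)|^2dt<\infty$, inner product $\langle u,v\rangle=\int u(t)^Tv(t)\,dt$; $\mathcal{L}_{2+}=\{u\in\mathcal{L}_2:u(t)=0\ \text{for}\ t<0\}$. For $T\ge0$, $(\Gamma_Tu)(t)=u(t)$ for $t\le T$, $0$ for $t>T$; $\mathcal{L}_{2e+}=\{u:\Gamma_Tu\in\mathcal{L}_{2+}\ \forall T\ge0\}$. A system is an operator $P:\mathcal{L}_{2e+}\to\mathcal{L}_{2e+}$ with $P0=0$, $P\ne0$; causal if $\Gamma_TP=\Gamma_TP\Gamma_T$ for all $T\ge 0$; a causal system is stable if $Pu\in\mathcal{L}_{2+}$ for all $u\in\mathcal{L}_{2+}$ and $\sup_{0\ne u\in\mathcal{L}_{2+}}\|Pu\|_2/\|u\|_2<\infty$. The singular angle $\theta(P)\in[0,\pi]$ is given by $\cos\theta(P)=\inf\{\langle u,Pu\rangle/(\|u\|_2\|Pu\|_2):0\neq u\in\mathcal{L}_{2+},\ Pu\ne0\}$. The feedback system $P\#C$: $u_1=e_1-y_2$, $u_2=e_2+y_1$,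 $y_1=Pu_1$, $y_2=Cu_2$; well-posed if $(u_1,u_2)\mapsto(u_1+Cu_2,\ u_2-Pu_1)$ has a causal inverse on $\mathcal{L}_{2e+}\times\mathcal{L}_{2e+}$. $P\#C|_{e_2=0}$ is the loop with $e_2=0$; it is stable if there is $c>0$ with $\|\Gamma_T(u_1,u_2)\|_2\le c\|\Gamma_Te\|_2$ for all $T\ge0$ and all $e=(e_1,0)$, $e_1\in\mathcal{L}_{2e+}$. *)

theory Defs
  imports "HOL-Analysis.Analysis"
begin

type_synonym 'n signal = "real \<Rightarrow> real ^ 'n"
type_synonym 'n sys = "'n signal \<Rightarrow> 'n signal"

definition L2 :: "'n::finite signal set" where
  "L2 = {u. u \<in> borel_measurable lborel \<and> integrable lborel (\<lambda>t. (norm (u t))\<^sup>2)}"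

definition l2norm :: "'n::finite signal \<Rightarrow> real" where
  "l2norm u = sqrt (LINT t|lborel. (norm (u t))\<^sup>2)"

definition l2inner :: "'n::finite signal \<Rightarrow> 'n signal \<Rightarrow> real" where
  "l2inner u v = (LINT t|lborel. u t \<bullet> v t)"

definition L2p :: "'n::finite signal set" where
  "L2p = {u \<in> L2. \<forall>t<0. u t = 0}"

definition trunc :: "real \<Rightarrow> 'n::finite signal \<Rightarrow> 'n signal" where
  "trunc T u = (\<lambda>t. if t \<le> T then u t else 0)"

definition L2ep :: "'n::finite signal set" where
  "L2ep = {u. \<forall>T\<ge>0. trunc T u \<in> L2p}"

definition is_system :: "'n::finite sys \<Rightarrow> bool" where
  "is_system P \<longleftrightarrow> (\<forall>u\<in>L2ep. P u \<in> L2ep) \<and> P (\<lambda>t. 0) = (\<lambda>t. 0)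
     \<and> (\<exists>u\<in>L2ep. P u \<noteq> (\<lambda>t. 0))"

definition causal :: "'n::finite sys \<Rightarrow> bool" where
  "causal P \<longleftrightarrow> (\<forall>T\<ge>0. \<forall>u\<in>L2ep. trunc T (P u) = trunc T (P (trunc T u)))"

text \<open>Nonzero elements of L2 are those of nonzero L2 norm (L2 as equivalence classes).\<close>
definition stable :: "'n::finite sys \<Rightarrow> bool" where
  "stable P \<longleftrightarrow> causal P \<and> (\<forall>u\<in>L2p. P u \<in> L2p) \<and>
     bdd_above ((\<lambda>u. l2norm (P u) / l2norm u) ` {u \<in> L2p. l2norm u \<noteq> 0})"

definition singular_angle :: "'n::finite sys \<Rightarrow> real" where
  "singular_angle P = arccos (Inf {l2inner u (P u) / (l2norm u * l2norm (P u)) | u.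
       u \<in> L2p \<and> l2norm u \<noteq> 0 \<and> l2norm (P u) \<noteq> 0})"

definition fb_map :: "'n::finite sys \<Rightarrow> 'n sys \<Rightarrow> 'n signal \<times> 'n signal \<Rightarrow> 'n signal \<times> 'n signal" where
  "fb_map P C = (\<lambda>(u1, u2). (\<lambda>t. u1 t + C u2 t, \<lambda>t. u2 t - P u1 t))"

definition well_posed :: "'n::finite sys \<Rightarrow> 'n sys \<Rightarrow> bool" where
  "well_posed P C \<longleftrightarrow> (\<exists>H. (\<forall>e \<in> L2ep \<times> L2ep. H e \<in> L2ep \<times> L2ep \<and> fb_map P C (H e) = e)
      \<and> (\<forall>u \<in> L2ep \<times> L2ep. H (fb_map P C u) = u)
      \<and> (\<forall>T\<ge>0. \<forall>e \<in> L2ep \<times> L2ep.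
            map_prod (trunc T) (trunc T) (H e)
          = map_prod (trunc T) (trunc T) (H (map_prod (trunc T) (trunc T) e))))"

text \<open>The (unique, under well-posedness) solution (u1,u2) of the loop with e2 = 0.\<close>
definition loop_sol :: "'n::finite sys \<Rightarrow> 'n sys \<Rightarrow> 'n signal \<Rightarrow> 'n signal \<times> 'n signal" where
  "loop_sol P C e1 = (THE p. p \<in> L2ep \<times> L2ep \<and> fb_map P C p = (e1, (\<lambda>t. 0)))"

definition loop_stable :: "'n::finite sys \<Rightarrow> 'n sys \<Rightarrow> bool" where
  "loop_stable P C \<longleftrightarrow> (\<exists>c>0. \<forall>T\<ge>0. \<forall>e1\<in>L2ep.
     sqrt ((l2norm (trunc T (fst (loop_sol P C e1))))\<^sup>2 + (l2norm (trunc T (snd (loop_sol P C e1))))\<^sup>2)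
       \<le> c * l2norm (trunc T e1))"

definition closed_loop :: "'n::finite sys \<Rightarrow> 'n sys \<Rightarrow> 'n sys" where
  "closed_loop P C e1 = P (fst (loop_sol P C e1))"

end

theory Submission
  imports Defs
begin


definition lc :: "real \<Rightarrow> 'n::finite signal \<Rightarrow> real \<Rightarrow> 'n signal \<Rightarrow> 'n signal" where
  "lc x f z h = (\<lambda>t. x *\<^sub>R f t + z *\<^sub>R h t)"

lemma L2_meas: "u \<in> L2 \<Longrightarrow> u \<in> borel_measurable lborel"
  by (simp add: L2_def)

lemma L2_int: "u \<in> L2 \<Longrightarrow> integrable lborel (\<lambda>t. (norm (u t))\<^sup>2)"
  by (simp add: L2_def)

lemma norm_add_sq_le: "(norm (a + b :: 'a::real_normed_vector))\<^sup>2 \<le> 2 * (norm a)\<^sup>2 + 2 * (norm b)\<^sup>2"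
proof -
  have "norm (a+b) \<le> norm a + norm b" by (rule norm_triangle_ineq)
  hence "(norm (a+b))\<^sup>2 \<le> (norm a + norm b)\<^sup>2" by (simp add: power_mono)
  also have "\<dots> \<le> 2 * (norm a)\<^sup>2 + 2 * (norm b)\<^sup>2"
    using sum_squares_bound[of "norm a" "norm b"] by (simp add: power2_sum)
  finally show ?thesis .
qed

lemma L2_lc: assumes "f \<in> L2" "h \<in> L2" shows "lc x f z h \<in> L2"
proof -
  have [measurable]: "f \<in> borel_measurable lborel" "h \<in> borel_measurable lborel"
    using assms by (auto simp: L2_def)
  have m: "lc x f z h \<in> borel_measurable lborel" unfolding lc_def by measurable
  have i: "integrable lborel (\<lambda>t. 2 * x\<^sup>2 * (norm (f t))\<^sup>2 + 2 * z\<^sup>2 * (norm (h t))\<^sup>2)"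
    using assms by (auto simp: L2_def)
  have "integrable lborel (\<lambda>t. (norm (lc x f z h t))\<^sup>2)"
  proof (rule Bochner_Integration.integrable_bound[OF i])
    show "(\<lambda>t. (norm (lc x f z h t))\<^sup>2) \<in> borel_measurable lborel" using m by measurable
    show "AE t in lborel. norm ((norm (lc x f z h t))\<^sup>2) \<le> norm (2 * x\<^sup>2 * (norm (f t))\<^sup>2 + 2 * z\<^sup>2 * (norm (h t))\<^sup>2)"
    proof (rule AE_I2)
      fix t
      have "(norm (lc x f z h t))\<^sup>2 \<le> 2 * (norm (x *\<^sub>R f t))\<^sup>2 + 2 * (norm (z *\<^sub>R h t))\<^sup>2"
        unfolding lc_def by (rule norm_add_sq_le)
      also have "\<dots> = 2 * x\<^sup>2 * (norm (f t))\<^sup>2 + 2 * z\<^sup>2 * (norm (h t))\<^sup>2"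
        by (simp add: power_mult_distrib)
      finally show "norm ((norm (lc x f z h t))\<^sup>2) \<le> norm (2 * x\<^sup>2 * (norm (f t))\<^sup>2 + 2 * z\<^sup>2 * (norm (h t))\<^sup>2)"
        by simp
    qed
  qed
  with m show ?thesis by (simp add: L2_def)
qed

lemma inner_int: assumes "u \<in> L2" "v \<in> L2" shows "integrable lborel (\<lambda>t. u t \<bullet> v t)"
proof -
  have [measurable]: "u \<in> borel_measurable lborel" "v \<in> borel_measurable lborel"
    using assms by (auto simp: L2_def)
  have i: "integrable lborel (\<lambda>t. (norm (u t))\<^sup>2 + (norm (v t))\<^sup>2)"
    using assms by (auto simp: L2_def)
  show ?thesis
  proof (rule Bochner_Integration.integrable_bound[OF i])
    show "(\<lambda>t. u t \<bullet> v t) \<in> borel_measurable lborel" by measurable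
    show "AE t in lborel. norm (u t \<bullet> v t) \<le> norm ((norm (u t))\<^sup>2 + (norm (v t))\<^sup>2)"
    proof (rule AE_I2)
      fix t
      have "\<bar>u t \<bullet> v t\<bar> \<le> norm (u t) * norm (v t)" by (rule Cauchy_Schwarz_ineq2)
      also have "\<dots> \<le> (norm (u t))\<^sup>2 + (norm (v t))\<^sup>2"
        using sum_squares_bound[of "norm (u t)" "norm (v t)"]
          mult_nonneg_nonneg[OF norm_ge_zero norm_ge_zero, of "u t" "v t"] by linarith
      finally show "norm (u t \<bullet> v t) \<le> norm ((norm (u t))\<^sup>2 + (norm (v t))\<^sup>2)" by simp
    qed
  qed
qed

lemma l2inner_sym: "l2inner u v = l2inner v u"
  unfolding l2inner_def by (simp add: inner_commute)

lemma l2inner_lc: assumes "f \<in> L2" "h \<in> L2" "w \<in> L2"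
  shows "l2inner (lc x f z h) w = x * l2inner f w + z * l2inner h w"
proof -
  have "l2inner (lc x f z h) w = (LINT t|lborel. x * (f t \<bullet> w t) + z * (h t \<bullet> w t))"
    unfolding l2inner_def lc_def by (simp add: inner_add_left)
  also have "\<dots> = x * l2inner f w + z * l2inner h w"
    unfolding l2inner_def
    using inner_int[OF assms(1,3)] inner_int[OF assms(2,3)] by simp
  finally show ?thesis .
qed

lemma l2inner_lc2: assumes "f \<in> L2" "h \<in> L2" "w \<in> L2"
  shows "l2inner w (lc x f z h) = x * l2inner w f + z * l2inner w h"
  using l2inner_lc[OF assms] by (simp add: l2inner_sym)

lemma l2norm_sq: "u \<in> L2 \<Longrightarrow> (l2norm u)\<^sup>2 = l2inner u u"
  unfolding l2norm_def l2inner_def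
  by (simp add: power2_norm_eq_inner integral_nonneg_AE)

lemma l2norm_nonneg: "l2norm u \<ge> 0"
  unfolding l2norm_def by simp

lemma quad_cs: fixes A B C :: real
  assumes "\<And>t. 0 \<le> A + 2 * t * B + t\<^sup>2 * C" "A \<ge> 0" "C \<ge> 0"
  shows "B\<^sup>2 \<le> A * C"
proof (cases "C = 0")
  case True
  show ?thesis
  proof (rule ccontr)
    assume "\<not> ?thesis"
    hence "B \<noteq> 0" using True by simp
    have "0 \<le> A + 2 * (- (A + 1) / (2 * B)) * B" using assms(1)[of "- (A + 1) / (2 * B)"] True by simp
    also have "\<dots> = -1" using \<open>B \<noteq> 0\<close> by (simp add: field_simps)
    finally show False by simp
  qed
next
  case False
  hence Cp: "C > 0" using assms by simp
  have "0 \<le> A + 2 * (- B / C) * B + (- B / C)\<^sup>2 * C" by (rule assms(1))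
  also have "\<dots> = A - B\<^sup>2 / C" using Cp by (simp add: field_simps power2_eq_square)
  finally show ?thesis using Cp by (simp add: field_simps)
qed

lemma l2_cs: assumes "u \<in> L2" "v \<in> L2" shows "\<bar>l2inner u v\<bar> \<le> l2norm u * l2norm v"
proof -
  have q: "0 \<le> l2inner u u + 2 * t * l2inner u v + t\<^sup>2 * l2inner v v" for t
  proof -
    have "0 \<le> (l2norm (lc 1 u t v))\<^sup>2" by simp
    also have "\<dots> = l2inner (lc 1 u t v) (lc 1 u t v)" by (rule l2norm_sq[OF L2_lc[OF assms]])
    also have "\<dots> = l2inner u u + 2 * t * l2inner u v + t\<^sup>2 * l2inner v v"
      using assms L2_lc[OF assms]
      by (simp add: l2inner_lc l2inner_lc2 l2inner_sym[of v u] algebra_simps power2_eq_square)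
    finally show ?thesis .
  qed
  have "(l2inner u v)\<^sup>2 \<le> l2inner u u * l2inner v v"
    by (rule quad_cs[OF q]) (auto simp: l2norm_sq[symmetric] assms)
  also have "\<dots> = (l2norm u * l2norm v)\<^sup>2"
    using assms by (simp add: l2norm_sq power_mult_distrib)
  finally have "\<bar>l2inner u v\<bar>\<^sup>2 \<le> (l2norm u * l2norm v)\<^sup>2" by simp
  thus ?thesis
    by (rule power2_le_imp_le) (simp add: l2norm_nonneg)
qed



lemma trunc_meas: assumes [measurable]: "u \<in> borel_measurable lborel"
  shows "trunc T u \<in> borel_measurable lborel"
  unfolding trunc_def by measurable

lemma trunc_norm_le: "(norm (trunc T u t))\<^sup>2 \<le> (norm (u t))\<^sup>2"
  unfolding trunc_def by auto

lemma trunc_L2: assumes "u \<in> L2" shows "trunc T u \<in> L2"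
proof -
  have m: "trunc T u \<in> borel_measurable lborel" using assms trunc_meas L2_meas by blast
  have "integrable lborel (\<lambda>t. (norm (trunc T u t))\<^sup>2)"
    apply (rule Bochner_Integration.integrable_bound[OF L2_int[OF assms]])
    using m apply measurable
    using trunc_norm_le by (auto intro!: AE_I2)
  with m show ?thesis by (simp add: L2_def)
qed

lemma trunc_L2p: "u \<in> L2p \<Longrightarrow> trunc T u \<in> L2p"
  unfolding L2p_def using trunc_L2 by (auto simp: trunc_def)

lemma L2p_L2ep: "u \<in> L2p \<Longrightarrow> u \<in> L2ep"
  unfolding L2ep_def using trunc_L2p by auto

lemma L2p_L2: "u \<in> L2p \<Longrightarrow> u \<in> L2"
  unfolding L2p_def by auto

lemma zero_L2p: "(\<lambda>t. 0) \<in> L2p"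
  unfolding L2p_def L2_def by simp

lemma L2p_lc: "f \<in> L2p \<Longrightarrow> h \<in> L2p \<Longrightarrow> lc x f z h \<in> L2p"
  unfolding L2p_def using L2_lc by (auto simp: lc_def)

lemma l2norm_trunc_le: assumes "u \<in> L2" shows "l2norm (trunc T u) \<le> l2norm u"
  unfolding l2norm_def
  by (rule real_sqrt_le_mono, rule integral_mono[OF L2_int[OF trunc_L2[OF assms]] L2_int[OF assms]])
     (rule trunc_norm_le)

lemma bnd_L2p:
  assumes u: "u \<in> L2ep" and B: "\<And>T. T \<ge> 0 \<Longrightarrow> l2norm (trunc T u) \<le> B"
  shows "u \<in> L2p \<and> l2norm u \<le> B"
proof -
  have tL2p: "trunc (real i) u \<in> L2p" for i using u unfolding L2ep_def by auto
  hence tL2: "trunc (real i) u \<in> L2" for i by (simp add: L2p_L2)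
  have ev: "eventually (\<lambda>i. trunc (real i) u t = u t) sequentially" for t
  proof (rule eventually_sequentiallyI[of "nat \<lceil>t\<rceil>"])
    fix i assume "nat \<lceil>t\<rceil> \<le> i"
    hence "t \<le> real i" by linarith
    thus "trunc (real i) u t = u t" by (simp add: trunc_def)
  qed
  have um: "u \<in> borel_measurable lborel"
  proof (rule borel_measurable_LIMSEQ_metric[of "\<lambda>i. trunc (real i) u"])
    show "trunc (real i) u \<in> borel_measurable lborel" for i using tL2 L2_meas by blast
    show "(\<lambda>i. trunc (real i) u t) \<longlonglongrightarrow> u t" for t by (rule tendsto_eventually[OF ev])
  qed
  define f where "f i t = (norm (trunc (real i) u t))\<^sup>2" for i t
  have fi: "integrable lborel (f i)" for i unfolding f_def using L2_int[OF tL2] .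
  have fmono: "mono (\<lambda>i. f i t)" for t
    unfolding mono_def f_def trunc_def by auto
  have flim: "(\<lambda>i. f i t) \<longlonglongrightarrow> (norm (u t))\<^sup>2" for t
    unfolding f_def by (rule tendsto_eventually) (use ev[of t] in \<open>auto elim: eventually_mono\<close>)
  have B0: "0 \<le> B" using B[of 0] l2norm_nonneg[of "trunc 0 u"] by simp
  have intf: "integral\<^sup>L lborel (f i) = (l2norm (trunc (real i) u))\<^sup>2" for i
    unfolding f_def l2norm_def by (simp add: integral_nonneg_AE)
  have Xle: "integral\<^sup>L lborel (f i) \<le> B\<^sup>2" for i
    unfolding intf using B[of "real i"] l2norm_nonneg[of "trunc (real i) u"]
    by (simp add: power_mono)
  have inc: "incseq (\<lambda>i. integral\<^sup>L lborel (f i))"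
    unfolding incseq_def using fmono fi by (auto intro!: integral_mono simp: mono_def)
  obtain L where L: "(\<lambda>i. integral\<^sup>L lborel (f i)) \<longlonglongrightarrow> L"
    using incseq_convergent[OF inc, of "B\<^sup>2"] Xle by blast
  have LB: "L \<le> B\<^sup>2" using L Xle by (meson LIMSEQ_le_const2)
  have m2: "(\<lambda>t. (norm (u t))\<^sup>2) \<in> borel_measurable lborel" using um by measurable
  have I: "integrable lborel (\<lambda>t. (norm (u t))\<^sup>2)"
    by (rule integrable_monotone_convergence[OF fi _ _ L m2]) (use fmono flim in auto)
  have IL: "integral\<^sup>L lborel (\<lambda>t. (norm (u t))\<^sup>2) = L"
    by (rule integral_monotone_convergence[OF fi _ _ L m2]) (use fmono flim in auto)
  have "l2norm u \<le> B" unfolding l2norm_def IL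
    using LB B0 real_sqrt_le_mono[OF LB] by simp
  moreover have "u t = 0" if "t < 0" for t
  proof -
    have "trunc 0 u \<in> L2p" using u unfolding L2ep_def by auto
    hence "trunc 0 u t = 0" using that unfolding L2p_def by auto
    thus ?thesis using that by (simp add: trunc_def)
  qed
  ultimately show ?thesis using um I by (simp add: L2p_def L2_def)
qed



lemma geo_real:
  fixes U V Y a b g pn qn k E :: real
  assumes Y: "Y > 0" and U: "U \<ge> 0" and V: "V \<ge> 0" and pn: "pn \<ge> 0" and qn: "qn \<ge> 0"
    and hp: "pn\<^sup>2 = U\<^sup>2 - (a/Y)\<^sup>2" and hq: "qn\<^sup>2 = V\<^sup>2 - (b/Y)\<^sup>2"
    and hg: "g - (a/Y)*(b/Y) \<ge> -(pn*qn)"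
    and hE: "E\<^sup>2 = U\<^sup>2 + 2*g + V\<^sup>2" and E: "E \<ge> 0" and k0: "k > 0" and k1: "k \<le> 1"
    and ha: "a \<ge> -k*U*Y" and hb: "b \<ge> k*V*Y"
  shows "a + b \<ge> -k*E*Y"
proof -
  define x where "x = a/Y"
  define z where "z = b/Y"
  have ax: "a = x*Y" and bz: "b = z*Y" using Y by (auto simp: x_def z_def)
  have hp': "U\<^sup>2 = x\<^sup>2 + pn\<^sup>2" using hp unfolding x_def by linarith
  have hq': "V\<^sup>2 = z\<^sup>2 + qn\<^sup>2" using hq unfolding z_def by linarith
  have hg': "g \<ge> x*z - pn*qn" using hg unfolding x_def z_def by linarith
  have "(-k*U)*Y \<le> x*Y" using ha ax by simp
  hence ha': "x \<ge> -k*U" using Y by (rule mult_right_le_imp_le) 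
  have "(k*V)*Y \<le> z*Y" using hb bz by simp
  hence hb': "z \<ge> k*V" using Y by (rule mult_right_le_imp_le)
  have "x + z \<ge> -k*E"
  proof (cases "x + z \<ge> 0")
    case True
    have "k*E \<ge> 0" using k0 E by simp
    then show ?thesis using True by linarith
  next
    case False
    have "k*V \<ge> 0" using k0 V by simp
    hence z0: "z \<ge> 0" using hb' by linarith
    hence x0: "x < 0" using False by simp
    define s where "s = sqrt (1 - k\<^sup>2)"
    have k2: "k\<^sup>2 \<le> 1" using k0 k1 by (simp add: power_le_one)
    have s0: "s \<ge> 0" and s2: "s\<^sup>2 = 1 - k\<^sup>2" using k2 by (auto simp: s_def)
    have "(-x)\<^sup>2 \<le> (k*U)\<^sup>2" using ha' x0 by (intro power_mono) auto
    hence "x\<^sup>2 \<le> k\<^sup>2 * U\<^sup>2" by (simp add: power_mult_distrib)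
    hence "x\<^sup>2 \<le> k\<^sup>2 * x\<^sup>2 + k\<^sup>2 * pn\<^sup>2" unfolding hp' by (simp add: distrib_left)
    hence "(1 - k\<^sup>2) * x\<^sup>2 \<le> k\<^sup>2 * pn\<^sup>2" by (simp add: left_diff_distrib)
    hence "(s*(-x))\<^sup>2 \<le> (k*pn)\<^sup>2" by (simp add: power_mult_distrib s2)
    hence A: "s*(-x) \<le> k*pn" by (rule power2_le_imp_le) (use k0 pn in auto)
    have "(k*V)\<^sup>2 \<le> z\<^sup>2" using hb' k0 V by (intro power_mono) auto
    hence "k\<^sup>2 * V\<^sup>2 \<le> z\<^sup>2" by (simp add: power_mult_distrib)
    hence "k\<^sup>2 * z\<^sup>2 + k\<^sup>2 * qn\<^sup>2 \<le> z\<^sup>2" unfolding hq' by (simp add: distrib_left)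
    hence "k\<^sup>2 * qn\<^sup>2 \<le> (1 - k\<^sup>2) * z\<^sup>2" by (simp add: left_diff_distrib)
    hence "(k*qn)\<^sup>2 \<le> (s*z)\<^sup>2" by (simp add: power_mult_distrib s2)
    hence Bq: "k*qn \<le> s*z" by (rule power2_le_imp_le) (use s0 z0 in auto)
    have C1: "s*(-(x+z)) \<le> k*(pn-qn)" using A Bq by (simp add: right_diff_distrib distrib_left)
    have C0: "0 \<le> s*(-(x+z))" using s0 False by simp
    have E2: "E\<^sup>2 \<ge> (x+z)\<^sup>2 + (pn-qn)\<^sup>2"
    proof -
      have "(x+z)\<^sup>2 + (pn-qn)\<^sup>2 = x\<^sup>2 + pn\<^sup>2 + 2*(x*z - pn*qn) + (z\<^sup>2 + qn\<^sup>2)"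
        by (simp add: power2_sum power2_diff)
      moreover have "2*(x*z - pn*qn) \<le> 2*g" using hg' by simp
      moreover have "E\<^sup>2 = x\<^sup>2 + pn\<^sup>2 + 2*g + (z\<^sup>2 + qn\<^sup>2)" using hE hp' hq' by simp
      ultimately show ?thesis by linarith
    qed
    have "(s*(-(x+z)))\<^sup>2 \<le> (k*(pn-qn))\<^sup>2" using C1 C0 by (intro power_mono) auto
    moreover have mz: "(-x-z)\<^sup>2 = (x+z)\<^sup>2" by (simp add: power2_eq_square algebra_simps)
    ultimately have "(1 - k\<^sup>2) * (x+z)\<^sup>2 \<le> k\<^sup>2 * (pn-qn)\<^sup>2" by (simp add: power_mult_distrib s2)
    also have "\<dots> \<le> k\<^sup>2 * (E\<^sup>2 - (x+z)\<^sup>2)" using E2 by (intro mult_left_mono) auto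
    finally have "(x+z)\<^sup>2 \<le> k\<^sup>2 * E\<^sup>2" by (simp add: left_diff_distrib right_diff_distrib)
    hence "(-(x+z))\<^sup>2 \<le> (k*E)\<^sup>2" by (simp add: power_mult_distrib mz)
    hence "-(x+z) \<le> k*E" by (rule power2_le_imp_le) (use k0 E in auto)
    thus ?thesis by simp
  qed
  hence "(-k*E)*Y \<le> (x+z)*Y" using Y by (intro mult_right_mono) auto
  thus ?thesis unfolding ax bz by (simp add: distrib_right)
qed

lemma l2inner_self: "u \<in> L2 \<Longrightarrow> l2inner u u = (l2norm u)\<^sup>2"
  by (simp add: l2norm_sq)

lemma lc_norm_sq: assumes "u \<in> L2" "c \<in> L2"
  shows "(l2norm (lc 1 u 1 c))\<^sup>2 = (l2norm u)\<^sup>2 + 2 * l2inner u c + (l2norm c)\<^sup>2"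
  using assms L2_lc[OF assms]
  by (simp add: l2norm_sq l2inner_lc l2inner_lc2 l2inner_sym[of c u])

lemma lc_tri: assumes "u \<in> L2" "c \<in> L2"
  shows "l2norm (lc 1 u 1 c) \<le> l2norm u + l2norm c"
proof -
  have "l2inner u c \<le> l2norm u * l2norm c" using l2_cs[OF assms] by simp
  hence "(l2norm (lc 1 u 1 c))\<^sup>2 \<le> (l2norm u + l2norm c)\<^sup>2"
    using lc_norm_sq[OF assms] by (simp add: power2_sum)
  thus ?thesis by (rule power2_le_imp_le) (simp add: l2norm_nonneg)
qed

lemma geo_obtuse:
  assumes u: "u \<in> L2" and c: "c \<in> L2" and y: "y \<in> L2" and Y0: "l2norm y \<noteq> 0"
    and k0: "0 < k" and k1: "k \<le> 1"
    and ha: "l2inner u y \<ge> -k * l2norm u * l2norm y"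
    and hb: "l2inner c y \<ge> k * l2norm c * l2norm y"
  shows "l2inner (lc 1 u 1 c) y \<ge> -k * l2norm (lc 1 u 1 c) * l2norm y"
proof -
  define Y where "Y = l2norm y"
  define a where "a = l2inner u y"
  define b where "b = l2inner c y"
  define g where "g = l2inner u c"
  have Yp: "Y > 0" using Y0 l2norm_nonneg[of y] unfolding Y_def by linarith
  have yy: "l2inner y y = Y\<^sup>2" using y by (simp add: l2norm_sq Y_def)
  define p where "p = lc 1 u (-(a/Y\<^sup>2)) y"
  define q where "q = lc 1 c (-(b/Y\<^sup>2)) y"
  have p: "p \<in> L2" and q: "q \<in> L2" using L2_lc u c y by (auto simp: p_def q_def)
  have "(l2norm p)\<^sup>2 = l2inner p p" using p by (simp add: l2norm_sq)
  also have "\<dots> = (l2norm u)\<^sup>2 - (a/Y)\<^sup>2"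
    using u y Yp unfolding p_def
    by (simp add: l2inner_lc l2inner_lc2 L2_lc l2norm_sq[OF u] l2norm_sq[OF u, unfolded power2_eq_square] yy l2inner_sym[of y u] a_def[symmetric]
        field_simps power2_eq_square)
  finally have hp: "(l2norm p)\<^sup>2 = (l2norm u)\<^sup>2 - (a/Y)\<^sup>2" .
  have "(l2norm q)\<^sup>2 = l2inner q q" using q by (simp add: l2norm_sq)
  also have "\<dots> = (l2norm c)\<^sup>2 - (b/Y)\<^sup>2"
    using c y Yp unfolding q_def
    by (simp add: l2inner_lc l2inner_lc2 L2_lc l2norm_sq[OF c] l2norm_sq[OF c, unfolded power2_eq_square] yy l2inner_sym[of y c] b_def[symmetric]
        field_simps power2_eq_square)
  finally have hq: "(l2norm q)\<^sup>2 = (l2norm c)\<^sup>2 - (b/Y)\<^sup>2" .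
  have "l2inner p q = g - (a/Y)*(b/Y)"
    using u c y Yp unfolding p_def q_def
    by (simp add: l2inner_lc l2inner_lc2 L2_lc yy l2inner_sym[of y u] l2inner_sym[of y c]
        a_def[symmetric] b_def[symmetric] g_def[symmetric] field_simps power2_eq_square)
  moreover have "\<bar>l2inner p q\<bar> \<le> l2norm p * l2norm q" by (rule l2_cs[OF p q])
  ultimately have hg: "g - (a/Y)*(b/Y) \<ge> -(l2norm p * l2norm q)" by linarith
  have lin: "l2inner (lc 1 u 1 c) y = a + b" using u c y by (simp add: l2inner_lc a_def b_def)
  show ?thesis unfolding lin Y_def[symmetric]
    apply (rule geo_real[OF Yp l2norm_nonneg l2norm_nonneg l2norm_nonneg l2norm_nonneg hp hq hg
          _ l2norm_nonneg k0 k1])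
    using lc_norm_sq[OF u c] ha hb by (auto simp: g_def a_def b_def Y_def)
qed

lemma lc_comm: "lc 1 u 1 c = lc 1 c 1 u"
  unfolding lc_def by (simp add: add.commute)

lemma geo_L2:
  assumes u: "u \<in> L2" and c: "c \<in> L2" and y: "y \<in> L2" and Y0: "l2norm y \<noteq> 0"
    and al: "0 \<le> \<alpha>" "\<alpha> \<le> pi" and be: "0 \<le> \<beta>" "\<beta> \<le> pi" and ab: "\<alpha> + \<beta> \<le> pi"
    and ha: "l2inner u y \<ge> cos \<alpha> * l2norm u * l2norm y"
    and hb: "l2inner c y \<ge> cos \<beta> * l2norm c * l2norm y"
  shows "l2inner (lc 1 u 1 c) y \<ge> cos (max \<alpha> \<beta>) * l2norm (lc 1 u 1 c) * l2norm y"
proof -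
  have nn: "0 \<le> l2norm u * l2norm y" "0 \<le> l2norm c * l2norm y" by (simp_all add: l2norm_nonneg)
  consider "\<alpha> \<le> pi/2" "\<beta> \<le> pi/2" | "\<alpha> > pi/2" | "\<beta> > pi/2" by linarith
  then show ?thesis
  proof cases
    case 1
    define m where "m = max \<alpha> \<beta>"
    have m0: "0 \<le> cos m" unfolding m_def using 1 al be by (intro cos_ge_zero) auto
    have "cos m \<le> cos \<alpha>" "cos m \<le> cos \<beta>" unfolding m_def using al be
      by (auto intro!: cos_monotone_0_pi_le)
    hence "cos m * (l2norm u * l2norm y) \<le> cos \<alpha> * (l2norm u * l2norm y)"
      "cos m * (l2norm c * l2norm y) \<le> cos \<beta> * (l2norm c * l2norm y)"
      using nn by (auto intro: mult_right_mono)
    hence "l2inner (lc 1 u 1 c) y \<ge> cos m * (l2norm u + l2norm c) * l2norm y"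
      using ha hb u c y by (simp add: l2inner_lc algebra_simps)
    moreover have "cos m * l2norm (lc 1 u 1 c) * l2norm y \<le> cos m * (l2norm u + l2norm c) * l2norm y"
      using lc_tri[OF u c] m0 by (intro mult_right_mono mult_left_mono) (auto simp: l2norm_nonneg)
    ultimately show ?thesis unfolding m_def by linarith
  next
    case 2
    have mx: "max \<alpha> \<beta> = \<alpha>" using 2 ab by simp
    have "0 < cos (pi - \<alpha>)" using 2 al by (intro cos_gt_zero_pi) auto
    hence k0: "0 < - cos \<alpha>" by simp
    have "cos (pi - \<alpha>) \<le> cos \<beta>" using ab be al by (intro cos_monotone_0_pi_le) auto
    hence "- cos \<alpha> * (l2norm c * l2norm y) \<le> cos \<beta> * (l2norm c * l2norm y)"
      using nn by (intro mult_right_mono) auto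
    hence hb': "l2inner c y \<ge> - cos \<alpha> * l2norm c * l2norm y" using hb by (simp add: mult.assoc)
    have "l2inner (lc 1 u 1 c) y \<ge> - (- cos \<alpha>) * l2norm (lc 1 u 1 c) * l2norm y"
      by (rule geo_obtuse[OF u c y Y0 k0]) (use ha hb' in auto)
    thus ?thesis unfolding mx by simp
  next
    case 3
    have mx: "max \<alpha> \<beta> = \<beta>" using 3 ab by simp
    have "0 < cos (pi - \<beta>)" using 3 be by (intro cos_gt_zero_pi) auto
    hence k0: "0 < - cos \<beta>" by simp
    have "cos (pi - \<beta>) \<le> cos \<alpha>" using ab be al by (intro cos_monotone_0_pi_le) auto
    hence "- cos \<beta> * (l2norm u * l2norm y) \<le> cos \<alpha> * (l2norm u * l2norm y)"
      using nn by (intro mult_right_mono) auto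
    hence ha': "l2inner u y \<ge> - cos \<beta> * l2norm u * l2norm y" using ha by (simp add: mult.assoc)
    have "l2inner (lc 1 c 1 u) y \<ge> - (- cos \<beta>) * l2norm (lc 1 c 1 u) * l2norm y"
      by (rule geo_obtuse[OF c u y Y0 k0]) (use ha' hb in auto)
    thus ?thesis unfolding mx lc_comm[of c u] by simp
  qed
qed



definition SA :: "'n::finite sys \<Rightarrow> real set" where
  "SA P = {l2inner u (P u) / (l2norm u * l2norm (P u)) | u.
       u \<in> L2p \<and> l2norm u \<noteq> 0 \<and> l2norm (P u) \<noteq> 0}"

lemma sa_eq: "singular_angle P = arccos (Inf (SA P))"
  by (simp add: singular_angle_def SA_def)

lemma ratio_bound: assumes "u \<in> L2" "v \<in> L2" "l2norm u \<noteq> 0" "l2norm v \<noteq> 0"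
  shows "-1 \<le> l2inner u v / (l2norm u * l2norm v) \<and> l2inner u v / (l2norm u * l2norm v) \<le> 1"
proof -
  have pos: "l2norm u * l2norm v > 0" using assms(3,4) l2norm_nonneg[of u] l2norm_nonneg[of v]
    by (simp add: less_le)
  have "\<bar>l2inner u v\<bar> \<le> l2norm u * l2norm v" by (rule l2_cs[OF assms(1,2)])
  thus ?thesis using pos by (simp add: abs_le_iff divide_le_eq le_divide_eq)
qed

lemma SA_props:
  assumes st: "\<forall>u\<in>L2p. P u \<in> L2p" and ne: "SA P \<noteq> {}"
  shows "cos (singular_angle P) = Inf (SA P)" "\<And>x. x \<in> SA P \<Longrightarrow> Inf (SA P) \<le> x"
    "0 \<le> singular_angle P" "singular_angle P \<le> pi" "-1 \<le> Inf (SA P)" "Inf (SA P) \<le> 1"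
proof -
  have bd: "-1 \<le> x \<and> x \<le> 1" if xin: "x \<in> SA P" for x
  proof -
    obtain u where u: "x = l2inner u (P u) / (l2norm u * l2norm (P u))" "u \<in> L2p"
      "l2norm u \<noteq> 0" "l2norm (P u) \<noteq> 0" using xin unfolding SA_def by blast
    show ?thesis unfolding u(1) by (rule ratio_bound) (use u st L2p_L2 in auto)
  qed
  have bb: "bdd_below (SA P)" using bd by (auto intro!: bdd_belowI[of _ "-1"])
  show lo: "\<And>x. x \<in> SA P \<Longrightarrow> Inf (SA P) \<le> x" by (rule cInf_lower[OF _ bb])
  show m1: "-1 \<le> Inf (SA P)" using ne bd by (intro cInf_greatest) auto
  obtain x where "x \<in> SA P" using ne by blast
  thus p1: "Inf (SA P) \<le> 1" using lo bd by (meson order_trans)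
  show "cos (singular_angle P) = Inf (SA P)" unfolding sa_eq using m1 p1 by simp
  show "0 \<le> singular_angle P" "singular_angle P \<le> pi" unfolding sa_eq using arccos_bounded m1 p1 by auto
qed

lemma zero_L2ep: "(\<lambda>t. 0) \<in> L2ep"
  using L2p_L2ep zero_L2p by blast

lemma wp_H: "well_posed P C \<Longrightarrow> \<exists>H. (\<forall>e \<in> L2ep \<times> L2ep. H e \<in> L2ep \<times> L2ep \<and> fb_map P C (H e) = e) \<and> (\<forall>u \<in> L2ep \<times> L2ep. H (fb_map P C u) = u)"
  unfolding well_posed_def by (elim exE conjE) (intro exI conjI)

lemma loop_sol_unique:
  assumes wp: "well_posed P C" and p: "p \<in> L2ep \<times> L2ep" and fb: "fb_map P C p = (e1, (\<lambda>t. 0))"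
  shows "loop_sol P C e1 = p"
proof -
  obtain H where HH: "(\<forall>e \<in> L2ep \<times> L2ep. H e \<in> L2ep \<times> L2ep \<and> fb_map P C (H e) = e) \<and> (\<forall>u \<in> L2ep \<times> L2ep. H (fb_map P C u) = u)"
    using wp_H[OF wp] by (elim exE)
  have H2: "\<forall>u \<in> L2ep \<times> L2ep. H (fb_map P C u) = u" using HH by (rule conjunct2)
  have a: "q = p" if th: "q \<in> L2ep \<times> L2ep \<and> fb_map P C q = (e1, (\<lambda>t. 0))" for q
  proof -
    have hq: "H (fb_map P C q) = q" by (rule bspec[OF H2 conjunct1[OF th]])
    have hp: "H (fb_map P C p) = p" by (rule bspec[OF H2 p])
    have "fb_map P C q = (e1, (\<lambda>t. 0))" using th by (rule conjunct2)
    hence "fb_map P C q = fb_map P C p" using fb by (rule trans[OF _ sym])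
    hence "H (fb_map P C q) = H (fb_map P C p)" by (rule arg_cong)
    thus ?thesis using hq hp by (rule box_equals)
  qed
  have "(THE q. q \<in> L2ep \<times> L2ep \<and> fb_map P C q = (e1, (\<lambda>t. 0))) = p"
    apply (rule the_equality)
     apply (rule conjI[OF p fb])
    apply (erule a)
    done
  thus ?thesis unfolding loop_sol_def .
qed

lemma loop_sol_exists:
  assumes wp: "well_posed P C" and e1: "e1 \<in> L2ep"
  shows "loop_sol P C e1 \<in> L2ep \<times> L2ep \<and> fb_map P C (loop_sol P C e1) = (e1, (\<lambda>t. 0))"
proof -
  obtain H where HH: "(\<forall>e \<in> L2ep \<times> L2ep. H e \<in> L2ep \<times> L2ep \<and> fb_map P C (H e) = e) \<and> (\<forall>u \<in> L2ep \<times> L2ep. H (fb_map P C u) = u)"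
    using wp_H[OF wp] by (elim exE)
  have H1: "\<forall>e \<in> L2ep \<times> L2ep. H e \<in> L2ep \<times> L2ep \<and> fb_map P C (H e) = e" using HH by (rule conjunct1)
  have "(e1, (\<lambda>t. 0)) \<in> L2ep \<times> L2ep" by (rule SigmaI[OF e1 zero_L2ep])
  hence r: "H (e1, (\<lambda>t. 0)) \<in> L2ep \<times> L2ep \<and> fb_map P C (H (e1, (\<lambda>t. 0))) = (e1, (\<lambda>t. 0))"
    by (rule bspec[OF H1])
  have "loop_sol P C e1 = H (e1, (\<lambda>t. 0))"
    by (rule loop_sol_unique[OF wp conjunct1[OF r] conjunct2[OF r]])
  thus ?thesis using r by (simp only:)
qed

lemma loop_facts:
  assumes wp: "well_posed P C" and ls: "loop_stable P C" and e1: "e1 \<in> L2p"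
  obtains u1 u2 c where "loop_sol P C e1 = (u1, u2)" "u2 = P u1" "e1 = lc 1 u1 1 (C u2)"
    "u1 \<in> L2p" "u2 \<in> L2p" "closed_loop P C e1 = u2" "c > 0"
    "l2norm u1 \<le> c * l2norm e1" "l2norm u2 \<le> c * l2norm e1"
proof -
  obtain u1 u2 where lsol: "loop_sol P C e1 = (u1, u2)" by (cases "loop_sol P C e1") auto
  have ex0: "(u1, u2) \<in> L2ep \<times> L2ep \<and> fb_map P C (u1, u2) = (e1, (\<lambda>t. 0))"
    using loop_sol_exists[OF wp L2p_L2ep[OF e1]] unfolding lsol .
  have ex: "(u1, u2) \<in> L2ep \<times> L2ep" "fb_map P C (u1, u2) = (e1, (\<lambda>t. 0))"
    using ex0 by (rule conjunct1, rule conjunct2)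
  have e1eq: "e1 = (\<lambda>t. u1 t + C u2 t)" and z: "(\<lambda>t. u2 t - P u1 t) = (\<lambda>t. 0)"
    using ex(2) unfolding fb_map_def by auto
  have u2eq: "u2 = P u1"
  proof
    fix t show "u2 t = P u1 t" using fun_cong[OF z, of t] by simp
  qed
  obtain c where c: "c > 0" and cb: "\<forall>T\<ge>0. \<forall>e1\<in>L2ep.
     sqrt ((l2norm (trunc T (fst (loop_sol P C e1))))\<^sup>2 + (l2norm (trunc T (snd (loop_sol P C e1))))\<^sup>2)
       \<le> c * l2norm (trunc T e1)"
    using ls unfolding loop_stable_def by blast
  have b: "sqrt ((l2norm (trunc T u1))\<^sup>2 + (l2norm (trunc T u2))\<^sup>2) \<le> c * l2norm e1" if "T \<ge> 0" for T
  proof -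
    have "sqrt ((l2norm (trunc T u1))\<^sup>2 + (l2norm (trunc T u2))\<^sup>2) \<le> c * l2norm (trunc T e1)"
      using cb[rule_format, OF that L2p_L2ep[OF e1]] unfolding lsol by simp
    also have "\<dots> \<le> c * l2norm e1"
      using c l2norm_trunc_le[OF L2p_L2[OF e1]] by (intro mult_left_mono) auto
    finally show ?thesis .
  qed
  have b1: "l2norm (trunc T u1) \<le> c * l2norm e1" if "T \<ge> 0" for T
    by (rule order_trans[OF real_sqrt_sum_squares_ge1 b[OF that]])
  have b2: "l2norm (trunc T u2) \<le> c * l2norm e1" if "T \<ge> 0" for T
    by (rule order_trans[OF real_sqrt_sum_squares_ge2 b[OF that]])
  have uu: "u1 \<in> L2ep \<and> u2 \<in> L2ep" using ex(1) by (simp only: mem_Sigma_iff)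
  have u1e: "u1 \<in> L2ep" and u2e: "u2 \<in> L2ep" using uu by (rule conjunct1, rule conjunct2)
  have r1: "u1 \<in> L2p \<and> l2norm u1 \<le> c * l2norm e1" by (rule bnd_L2p[OF u1e b1])
  have r2: "u2 \<in> L2p \<and> l2norm u2 \<le> c * l2norm e1" by (rule bnd_L2p[OF u2e b2])
  have cl: "closed_loop P C e1 = u2" unfolding closed_loop_def lsol u2eq by simp
  have e1lc: "e1 = lc 1 u1 1 (C u2)" unfolding e1eq lc_def by simp
  show ?thesis
    apply (rule that[OF lsol u2eq e1lc _ _ cl c])
    using r1 r2 by auto
qed



lemma stable_L2p: "stable P \<Longrightarrow> \<forall>u\<in>L2p. P u \<in> L2p"
  unfolding stable_def by blast

lemma zero_norm_inner: assumes "u \<in> L2" "v \<in> L2" "l2norm u = 0" shows "l2inner u v = 0"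
  using l2_cs[OF assms(1,2)] assms(3) by simp

lemma lc_inner: assumes "u \<in> L2" "c \<in> L2" "y \<in> L2"
  shows "l2inner (lc 1 u 1 c) y = l2inner u y + l2inner c y"
  using l2inner_lc[OF assms] by simp

lemma zero_norm_sum1: assumes u: "u \<in> L2" and c: "c \<in> L2" and z: "l2norm u = 0"
  shows "l2norm (lc 1 u 1 c) = l2norm c"
proof -
  have "(l2norm (lc 1 u 1 c))\<^sup>2 = (l2norm c)\<^sup>2"
    using lc_norm_sq[OF u c] zero_norm_inner[OF u c z] z by simp
  thus ?thesis by (rule power2_eq_imp_eq) (simp_all add: l2norm_nonneg)
qed

lemma zero_norm_sum2: assumes u: "u \<in> L2" and c: "c \<in> L2" and z: "l2norm c = 0"
  shows "l2norm (lc 1 u 1 c) = l2norm u"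
proof -
  have "l2inner u c = 0" using zero_norm_inner[OF c u z] by (simp add: l2inner_sym)
  hence "(l2norm (lc 1 u 1 c))\<^sup>2 = (l2norm u)\<^sup>2"
    using lc_norm_sq[OF u c] z by simp
  thus ?thesis by (rule power2_eq_imp_eq) (simp_all add: l2norm_nonneg)
qed

lemma SA_memI: "u \<in> L2p \<Longrightarrow> l2norm u \<noteq> 0 \<Longrightarrow> l2norm (P u) \<noteq> 0 \<Longrightarrow>
    l2inner u (P u) / (l2norm u * l2norm (P u)) \<in> SA P"
  unfolding SA_def by blast

lemma SA_memE: assumes "x \<in> SA P"
  obtains u where "u \<in> L2p" "l2norm u \<noteq> 0" "l2norm (P u) \<noteq> 0"
    "x = l2inner u (P u) / (l2norm u * l2norm (P u))"
  using assms unfolding SA_def by blast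

lemma decomp:
  assumes stC: "stable C" and wp: "well_posed P C" and ls: "loop_stable P C"
    and x: "x \<in> SA (closed_loop P C)"
  obtains e u y where "e \<in> L2p" "u \<in> L2p" "y \<in> L2p" "C y \<in> L2p" "y = P u"
    "e = lc 1 u 1 (C y)" "l2norm e \<noteq> 0" "l2norm y \<noteq> 0"
    "x = l2inner e y / (l2norm e * l2norm y)"
proof -
  obtain e where e: "e \<in> L2p" "l2norm e \<noteq> 0" "l2norm (closed_loop P C e) \<noteq> 0"
    "x = l2inner e (closed_loop P C e) / (l2norm e * l2norm (closed_loop P C e))"
    using x by (rule SA_memE)
  obtain u1 u2 c where f: "loop_sol P C e = (u1, u2)" "u2 = P u1" "e = lc 1 u1 1 (C u2)"
    "u1 \<in> L2p" "u2 \<in> L2p" "closed_loop P C e = u2"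
    by (rule loop_facts[OF wp ls e(1)])
  have "C u2 \<in> L2p" using stable_L2p[OF stC] f(5) by blast
  show ?thesis
    by (rule that[OF e(1) f(4) f(5) \<open>C u2 \<in> L2p\<close> f(2) f(3)]) (use e f(6) in auto)
qed

lemma SG_nonempty:
  assumes stP: "stable P" and stC: "stable C" and wp: "well_posed P C" and ls: "loop_stable P C"
    and ne: "SA P \<noteq> {}"
  shows "SA (closed_loop P C) \<noteq> {}"
proof -
  obtain x where "x \<in> SA P" using ne by blast
  then obtain w where w: "w \<in> L2p" "l2norm w \<noteq> 0" "l2norm (P w) \<noteq> 0" by (rule SA_memE)
  have Pw: "P w \<in> L2p" using stable_L2p[OF stP] w(1) by blast
  have CPw: "C (P w) \<in> L2p" using stable_L2p[OF stC] Pw by blast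
  define e1 where "e1 = lc 1 w 1 (C (P w))"
  have e1: "e1 \<in> L2p" unfolding e1_def by (rule L2p_lc[OF w(1) CPw])
  have fb: "fb_map P C (w, P w) = (e1, (\<lambda>t. 0))"
    unfolding fb_map_def e1_def lc_def by simp
  have mem: "(w, P w) \<in> L2ep \<times> L2ep" by (rule SigmaI[OF L2p_L2ep[OF w(1)] L2p_L2ep[OF Pw]])
  have lsol: "loop_sol P C e1 = (w, P w)" by (rule loop_sol_unique[OF wp mem fb])
  obtain u1 u2 c where f: "loop_sol P C e1 = (u1, u2)" "closed_loop P C e1 = u2" "c > 0"
     "l2norm u2 \<le> c * l2norm e1"
    by (rule loop_facts[OF wp ls e1])
  have u2: "u2 = P w" using f(1) lsol by auto
  have "l2norm e1 \<noteq> 0"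
  proof
    assume "l2norm e1 = 0"
    hence "l2norm (P w) \<le> 0" using f(4) u2 by simp
    thus False using w(3) l2norm_nonneg[of "P w"] by simp
  qed
  hence "l2inner e1 (closed_loop P C e1) / (l2norm e1 * l2norm (closed_loop P C e1))
     \<in> SA (closed_loop P C)"
    by (intro SA_memI e1) (use f(2) u2 w(3) in auto)
  thus ?thesis by blast
qed

lemma elemP0:
  assumes stC: "stable C" and wp: "well_posed P C" and ls: "loop_stable P C"
    and x: "x \<in> SA (closed_loop P C)" and P0: "SA P = {}"
  shows "x \<in> SA C"
proof -
  obtain e u y where d: "e \<in> L2p" "u \<in> L2p" "y \<in> L2p" "C y \<in> L2p" "y = P u"
    "e = lc 1 u 1 (C y)" "l2norm e \<noteq> 0" "l2norm y \<noteq> 0"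
    "x = l2inner e y / (l2norm e * l2norm y)"
    by (rule decomp[OF stC wp ls x])
  have uz: "l2norm u = 0"
  proof (rule ccontr)
    assume "l2norm u \<noteq> 0"
    hence "l2inner u (P u) / (l2norm u * l2norm (P u)) \<in> SA P"
      using d by (intro SA_memI) auto
    thus False using P0 by simp
  qed
  have L: "u \<in> L2" "y \<in> L2" "C y \<in> L2" using d L2p_L2 by auto
  have en: "l2norm e = l2norm (C y)" unfolding d(6) by (rule zero_norm_sum1[OF L(1,3) uz])
  have ei: "l2inner e y = l2inner (C y) y"
    unfolding d(6) lc_inner[OF L(1,3,2)] zero_norm_inner[OF L(1,2) uz] by simp
  have "x = l2inner y (C y) / (l2norm y * l2norm (C y))"
    unfolding d(9) en ei by (simp add: l2inner_sym mult.commute)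
  also have "\<dots> \<in> SA C" using d en by (intro SA_memI) auto
  finally show ?thesis .
qed

lemma elemC0:
  assumes stC: "stable C" and wp: "well_posed P C" and ls: "loop_stable P C"
    and x: "x \<in> SA (closed_loop P C)" and C0: "SA C = {}"
  shows "x \<in> SA P"
proof -
  obtain e u y where d: "e \<in> L2p" "u \<in> L2p" "y \<in> L2p" "C y \<in> L2p" "y = P u"
    "e = lc 1 u 1 (C y)" "l2norm e \<noteq> 0" "l2norm y \<noteq> 0"
    "x = l2inner e y / (l2norm e * l2norm y)"
    by (rule decomp[OF stC wp ls x])
  have cz: "l2norm (C y) = 0"
  proof (rule ccontr)
    assume "l2norm (C y) \<noteq> 0"
    hence "l2inner y (C y) / (l2norm y * l2norm (C y)) \<in> SA C"
      using d by (intro SA_memI) auto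
    thus False using C0 by simp
  qed
  have L: "u \<in> L2" "y \<in> L2" "C y \<in> L2" using d L2p_L2 by auto
  have en: "l2norm e = l2norm u" unfolding d(6) by (rule zero_norm_sum2[OF L(1,3) cz])
  have ei: "l2inner e y = l2inner u y"
  proof -
    have "l2inner (C y) y = 0" by (rule zero_norm_inner[OF L(3,2) cz])
    thus ?thesis unfolding d(6) lc_inner[OF L(1,3,2)] by simp
  qed
  have "x = l2inner u (P u) / (l2norm u * l2norm (P u))"
    unfolding d(9) en ei unfolding d(5) ..
  also have "\<dots> \<in> SA P" using d en by (intro SA_memI) auto
  finally show ?thesis .
qed

lemma ratio_imp: assumes "l2norm u \<noteq> 0" "l2norm v \<noteq> 0" "m \<le> l2inner u v / (l2norm u * l2norm v)"
  shows "m * l2norm u * l2norm v \<le> l2inner u v"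
proof -
  have pos: "l2norm u * l2norm v > 0" using assms(1,2) l2norm_nonneg[of u] l2norm_nonneg[of v]
    by (simp add: less_le)
  show ?thesis using assms(3) pos by (simp add: pos_le_divide_eq mult.assoc)
qed

lemma elemBoth:
  assumes stP: "stable P" and stC: "stable C" and wp: "well_posed P C" and ls: "loop_stable P C"
    and x: "x \<in> SA (closed_loop P C)" and P1: "SA P \<noteq> {}" and C1: "SA C \<noteq> {}"
    and sum: "singular_angle P + singular_angle C \<le> pi"
  shows "cos (max (singular_angle P) (singular_angle C)) \<le> x"
proof -
  obtain e u y where d: "e \<in> L2p" "u \<in> L2p" "y \<in> L2p" "C y \<in> L2p" "y = P u"
    "e = lc 1 u 1 (C y)" "l2norm e \<noteq> 0" "l2norm y \<noteq> 0"
    "x = l2inner e y / (l2norm e * l2norm y)"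
    by (rule decomp[OF stC wp ls x])
  have L: "u \<in> L2" "y \<in> L2" "C y \<in> L2" using d L2p_L2 by auto
  note sP = SA_props[OF stable_L2p[OF stP] P1]
  note sC = SA_props[OF stable_L2p[OF stC] C1]
  have hu: "cos (singular_angle P) * l2norm u * l2norm y \<le> l2inner u y"
  proof (cases "l2norm u = 0")
    case True thus ?thesis using zero_norm_inner[OF L(1,2) True] by simp
  next
    case False
    have "l2inner u (P u) / (l2norm u * l2norm (P u)) \<in> SA P"
      using d False by (intro SA_memI) auto
    hence "cos (singular_angle P) \<le> l2inner u y / (l2norm u * l2norm y)"
      using sP(1,2) d(5) by auto
    thus ?thesis by (rule ratio_imp[OF False d(8)])
  qed
  have hc: "cos (singular_angle C) * l2norm (C y) * l2norm y \<le> l2inner (C y) y"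
  proof (cases "l2norm (C y) = 0")
    case True thus ?thesis using zero_norm_inner[OF L(3,2) True] by simp
  next
    case False
    have "l2inner y (C y) / (l2norm y * l2norm (C y)) \<in> SA C"
      using d False by (intro SA_memI) auto
    hence "cos (singular_angle C) \<le> l2inner y (C y) / (l2norm y * l2norm (C y))"
      using sC(1,2) by auto
    hence "cos (singular_angle C) \<le> l2inner (C y) y / (l2norm (C y) * l2norm y)"
      by (simp add: l2inner_sym mult.commute)
    thus ?thesis by (rule ratio_imp[OF False d(8)])
  qed
  have g: "l2inner (lc 1 u 1 (C y)) y \<ge> cos (max (singular_angle P) (singular_angle C)) * l2norm (lc 1 u 1 (C y)) * l2norm y"
    by (rule geo_L2[OF L(1,3,2) d(8) sP(3,4) sC(3,4) sum hu hc])
  have pos: "l2norm e * l2norm y > 0" using d(7,8) l2norm_nonneg[of e] l2norm_nonneg[of y]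
    by (simp add: less_le)
  show ?thesis unfolding d(9) using g pos unfolding d(6)[symmetric]
    by (simp add: pos_le_divide_eq mult.assoc)
qed

lemma angle_bound:
  assumes st: "\<forall>u\<in>L2p. G u \<in> L2p" and ne: "SA G \<noteq> {}" and lb: "\<And>x. x \<in> SA G \<Longrightarrow> m \<le> x"
    and m: "-1 \<le> m"
  shows "singular_angle G \<le> arccos m"
proof -
  note s = SA_props[OF st ne]
  have "m \<le> Inf (SA G)" using ne lb by (intro cInf_greatest) auto
  hence "arccos (Inf (SA G)) \<le> arccos m" using m s(6) by (intro arccos_le_arccos) auto
  thus ?thesis unfolding sa_eq .
qed

theorem proposition7:
  fixes P C :: "'n::finite sys"
  assumes "is_system P" and "is_system C"
    and "stable P" and "stable C"
    and "well_posed P C"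
    and "loop_stable P C"
    and "singular_angle P + singular_angle C \<le> pi"
  shows "singular_angle (closed_loop P C) \<le> max (singular_angle P) (singular_angle C)"
proof -
  note stP = assms(3) and stC = assms(4) and wp = assms(5) and ls = assms(6) and sum = assms(7)
  define G where "G = closed_loop P C"
  have stG: "\<forall>u\<in>L2p. G u \<in> L2p"
  proof
    fix e :: "'n signal" assume e: "e \<in> L2p"
    obtain u1 u2 c where f: "loop_sol P C e = (u1, u2)" "u2 = P u1" "e = lc 1 u1 1 (C u2)"
      "u1 \<in> L2p" "u2 \<in> L2p" "closed_loop P C e = u2"
      by (rule loop_facts[OF wp ls e])
    show "G e \<in> L2p" unfolding G_def f(6) by (rule f(5))
  qed
  show ?thesis
  proof (cases "SA G = {}")
    case True
    hence "SA P = {}" using SG_nonempty[OF stP stC wp ls] unfolding G_def by blast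
    hence "singular_angle G = singular_angle P" unfolding sa_eq using True by simp
    thus ?thesis unfolding G_def by simp
  next
    case False
    show ?thesis
    proof (cases "SA P = {}")
      case P0: True
      obtain x where x: "x \<in> SA G" using False by blast
      have C1: "SA C \<noteq> {}" using elemP0[OF stC wp ls _ P0] x unfolding G_def by blast
      note sC = SA_props[OF stable_L2p[OF stC] C1]
      have "singular_angle G \<le> arccos (Inf (SA C))"
        by (rule angle_bound[OF stG False _ sC(5)])
           (use elemP0[OF stC wp ls _ P0] sC(2) in \<open>auto simp: G_def\<close>)
      thus ?thesis unfolding G_def sa_eq[of C, symmetric] by simp
    next
      case P1: False
      show ?thesis
      proof (cases "SA C = {}")
        case C0: True
        note sP = SA_props[OF stable_L2p[OF stP] P1]
        have "singular_angle G \<le> arccos (Inf (SA P))"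
          by (rule angle_bound[OF stG False _ sP(5)])
             (use elemC0[OF stC wp ls _ C0] sP(2) in \<open>auto simp: G_def\<close>)
        thus ?thesis unfolding G_def sa_eq[of P, symmetric] by simp
      next
        case C1: False
        note sP = SA_props[OF stable_L2p[OF stP] P1]
        note sC = SA_props[OF stable_L2p[OF stC] C1]
        have "singular_angle G \<le> arccos (cos (max (singular_angle P) (singular_angle C)))"
          by (rule angle_bound[OF stG False])
             (use elemBoth[OF stP stC wp ls _ P1 C1 sum] in \<open>auto simp: G_def\<close>)
        also have "\<dots> = max (singular_angle P) (singular_angle C)"
          using sP(3,4) sC(3,4) by (intro arccos_cos) auto
        finally show ?thesis unfolding G_def .
      qed
    qed
  qed
qed

end
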